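(* We have \begin{align*} \sum_{k=1}^\infty\frac{5k-2}{k(2k-1)2^k\binom{3k}k}&=\frac{\pi}6,\\ \sum_{k=1}^\infty\frac{(7k-3)8^k}{k(2k-1)3^k\binom{3k}k}&=\frac{8\sqrt3}9\pi,\\ \sum_{k=1}^\infty\frac{28k-11}{k(2k-1)(-4)^k\binom{3k}k}&=-2\log2,\\ \sum_{k=1}^\infty\frac{7k-2}{k(2k-1)(-3)^k\binom{4k}{2k}}&=-\frac{\log3}4,\\ \sum_{k=1}^\infty\frac{10k-3}{k(2k-1)\binom{4k}{2k}}&=\frac{2\sqrt3}9\pi,\\ \sum_{k=1}^\infty\frac{(3k-1)4^k}{k(2k-1)\binom{4k}{2k}}&=\frac{\pi}2,\\ \sum_{k=1}^\infty\frac{(6k-1)(-2)^{k-1}}{k(2k-1)\binom{4k}{2k}}&=\frac{\pi}4,\\ \sum_{k=1}^\infty\frac{14k-3}{k(2k-1)4^k\binom{4k}{2k}}&=\frac23\log2,\\ \sum_{k=1}^\infty\frac{(12k^2+1)4^k}{\binom{4k}{2k}}&=\frac{11}2\pi+\frac{50}3,\\ \sum_{k=1}^\infty\frac{k(126k+29)(-2)^k}{\binom{4k}{2k}}&=-2\pi-\frac{65}3,\\ \sum_{k=1}^\infty\frac{k(70k-37)}{4^k\binom{4k}{2k}}&=\frac8{729}(46\log2+111). \end{align*}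
   Context: $\log$ is the natural logarithm. *)

theory Defs
  imports "HOL-Analysis.Analysis"
begin

end

theory Submission
  imports Defs "HOL-Real_Asymp.Real_Asymp"
begin


lemma beta_nat:
  "((\<lambda>t::real. t^m * (1-t)^n) has_integral (fact m * fact n / fact (m+n+1))) {0..1}"
proof -
  have "((\<lambda>t. t powr (real m + 1 - 1) * (1-t) powr (real n + 1 - 1)) has_integral
          Beta (real m + 1) (real n + 1)) {0..1}"
    by (rule has_integral_Beta_real) auto
  moreover have "Beta (real m + 1) (real n + 1) = fact m * fact n / fact (m+n+1)"
  proof -
    have "Gamma (real m + 1) = fact m" using Gamma_fact[of m] by (simp add: add.commute)
    moreover have "Gamma (real n + 1) = fact n" using Gamma_fact[of n] by (simp add: add.commute)
    moreover have "Gamma (real m + 1 + (real n + 1)) = fact (m+n+1)"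
      using Gamma_fact[of "m+n+1"] by (simp add: add.commute add.left_commute)
    ultimately show ?thesis by (simp add: Beta_def)
  qed
  ultimately have "((\<lambda>t. t powr (real m + 1 - 1) * (1-t) powr (real n + 1 - 1)) has_integral
          (fact m * fact n / fact (m+n+1))) {0..1}" by simp
  then show ?thesis
  proof (subst has_integral_spike_finite_eq[of "{0,1}"])
    show "finite {0::real,1}" by simp
  qed (auto simp: powr_realpow)
qed

lemma series_from_integrals:
  fixes w u :: "real \<Rightarrow> real" and f :: "nat \<Rightarrow> real"
  assumes cw: "continuous_on {0..1} w" and cu: "continuous_on {0..1} u"
    and c: "c < 1" "0 \<le> c" and ub: "\<And>x. x \<in> {0..1} \<Longrightarrow> \<bar>u x\<bar> \<le> c"
    and fi: "\<And>n. ((\<lambda>x. w x * u x ^ n) has_integral f n) {0..1}"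
    and I: "((\<lambda>x. w x / (1 - u x)) has_integral I) {0..1}"
  shows "f sums I"
proof -
  obtain M where M: "\<And>x. x \<in> {0..1} \<Longrightarrow> \<bar>w x\<bar> \<le> M"
    using compact_imp_bounded[OF compact_continuous_image[OF cw compact_Icc]]
    unfolding bounded_iff by fastforce
  have u1: "1 - u x > 0" if "x \<in> {0..1}" for x using ub[OF that] c by linarith
  define J where "J N = integral {0..1} (\<lambda>x. w x * u x ^ N / (1 - u x))" for N
  have cJ: "continuous_on {0..1} (\<lambda>x. w x * u x ^ N / (1 - u x))" for N
    using u1 by (intro continuous_intros cw cu) fastforce+
  have psum: "(\<Sum>n<N. f n) = I - J N" for N
  proof -
    have h1: "((\<lambda>x. \<Sum>n<N. w x * u x ^ n) has_integral (\<Sum>n<N. f n)) {0..1}"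
      by (rule has_integral_sum) (auto intro: fi)
    have h2: "((\<lambda>x. w x / (1 - u x) - w x * u x ^ N / (1 - u x)) has_integral (I - J N)) {0..1}"
      unfolding J_def
      by (intro has_integral_diff I integrable_integral integrable_continuous_interval cJ)
    have "(\<lambda>x. \<Sum>n<N. w x * u x ^ n) x = w x / (1 - u x) - w x * u x ^ N / (1 - u x)"
      if "x \<in> {0..1}" for x
    proof -
      have "u x \<noteq> 1" using u1[OF that] by auto
      then have "(\<Sum>n<N. w x * u x ^ n) = w x * ((1 - u x ^ N) / (1 - u x))"
        by (simp add: sum_distrib_left[symmetric] sum_gp_strict)
      also have "\<dots> = w x / (1 - u x) - w x * u x ^ N / (1 - u x)"
        by (simp add: diff_divide_distrib right_diff_distrib)
      finally show ?thesis by simp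
    qed
    then have "((\<lambda>x. \<Sum>n<N. w x * u x ^ n) has_integral (I - J N)) {0..1}"
      using has_integral_cong h2 by (smt (verit))
    then show ?thesis using h1 has_integral_unique by blast
  qed
  have Jb: "\<bar>J N\<bar> \<le> M / (1 - c) * c ^ N" for N
  proof -
    have "norm (J N) \<le> M / (1 - c) * c ^ N * (1 - 0)"
      unfolding J_def
    proof (rule integral_bound[OF _ cJ])
      fix t :: real assume t: "t \<in> {0..1}"
      have "\<bar>u t ^ N\<bar> \<le> c ^ N" using ub[OF t] by (simp add: power_abs power_mono)
      moreover have "1 - c \<le> 1 - u t" using ub[OF t] by linarith
      moreover have "\<bar>w t\<bar> \<le> M" using M[OF t] .
      ultimately have "\<bar>w t\<bar> * \<bar>u t ^ N\<bar> / (1 - u t) \<le> M * c ^ N / (1 - c)"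
        using c u1[OF t]
        by (intro frac_le mult_mono) auto
      then show "norm (w t * u t ^ N / (1 - u t)) \<le> M / (1 - c) * c ^ N"
        using u1[OF t] by (simp add: abs_mult abs_divide)
    qed auto
    then show ?thesis by simp
  qed
  have "J \<longlonglongrightarrow> 0"
  proof (rule Lim_null_comparison)
    show "\<forall>\<^sub>F N in sequentially. norm (J N) \<le> M / (1 - c) * c ^ N" using Jb by simp
    show "(\<lambda>N. M / (1 - c) * c ^ N) \<longlonglongrightarrow> 0"
      using c by (intro tendsto_mult_right_zero LIMSEQ_power_zero) auto
  qed
  then have "(\<lambda>N. I - J N) \<longlonglongrightarrow> I - 0" by (intro tendsto_intros)
  then show ?thesis unfolding sums_def psum by simp
qed



lemma famA_val:
  fixes a b z :: real
  shows "2/3*z^Suc n*((a+2*b) * (fact (Suc n) * fact (2*n) / fact (Suc n + 2*n + 1))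
           + (-b) * (fact n * fact (2*n+1) / fact (n + (2*n+1) + 1)))
       = (a*real(Suc n)+b)*z^(Suc n)/(real(Suc n)*(2*real(Suc n)-1)*real(3*Suc n choose Suc n))"
proof -
  define N where "N = real n"
  define F where "F = (fact n::real)"
  define E where "E = (fact (2*n)::real)"
  define T where "T = (fact (3*n)::real)"
  have pos: "F > 0" "E > 0" "T > 0" "N \<ge> 0" unfolding F_def E_def T_def N_def by simp_all
  have e1: "fact (Suc n + 2*n + 1) = (3*N+2)*(3*N+1)*T" "fact (n + (2*n+1) + 1) = (3*N+2)*(3*N+1)*T"
  proof -
    have "Suc n + 2*n + 1 = Suc (Suc (3*n))" "n + (2*n+1) + 1 = Suc (Suc (3*n))" by simp_all
    then show "fact (Suc n + 2*n + 1) = (3*N+2)*(3*N+1)*T" "fact (n + (2*n+1) + 1) = (3*N+2)*(3*N+1)*T"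
      unfolding T_def N_def by (simp_all add: algebra_simps)
  qed
  have e2: "fact (3*Suc n) = (3*N+3)*(3*N+2)*(3*N+1)*T"
  proof -
    have "3*Suc n = Suc (Suc (Suc (3*n)))" by simp
    show ?thesis unfolding T_def N_def by (subst \<open>3*Suc n = _\<close>) (simp add: algebra_simps)
  qed
  have e3: "fact (2*Suc n) = (2*N+2)*(2*N+1)*E"
  proof -
    have "2*Suc n = Suc (Suc (2*n))" by simp
    show ?thesis unfolding E_def N_def by (subst \<open>2*Suc n = _\<close>) (simp add: algebra_simps)
  qed
  have e4: "fact (2*n+1) = (2*N+1)*E" unfolding E_def N_def by (simp add: algebra_simps)
  have e5: "fact (Suc n) = (N+1)*F" unfolding F_def N_def by (simp add: algebra_simps)
  have C: "real(3*Suc n choose Suc n) = fact (3*Suc n) / (fact (Suc n) * fact (2 * Suc n))"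
    by (subst binomial_fact) (auto simp: algebra_simps)
  have R: "real (Suc n) = N + 1" unfolding N_def by simp
  obtain p1 p2 p3 q r1 r2 where d: "p1 = 3*N+1" "p2 = 3*N+2" "p3=3*N+3" "q = N+1" "r1 = 2*N+1" "r2 = 2*N+2" by blast
  have nz: "p1 > 0" "p2 > 0" "p3 > 0" "q > 0" "r1 > 0" "r2 > 0" using pos d by auto
  have r: "2*(N+1)-1 = r1" using d by simp
  show ?thesis
    unfolding C e1 e2 e3 e4 e5 R F_def[symmetric] E_def[symmetric]
    unfolding r unfolding d[symmetric] using pos nz
    apply (simp add: field_simps)
    unfolding d by algebra
qed

lemma famA_int:
  fixes a b z :: real
  shows "((\<lambda>x. 2/3*z*((a+2*b)*x - b*(1-x)) * (z*x*(1-x)^2)^n) has_integral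
     ((a*real(Suc n)+b)*z^(Suc n)/(real(Suc n)*(2*real(Suc n)-1)*real(3*Suc n choose Suc n)))) {0..1}"
proof -
  have "((\<lambda>x. 2/3*z^Suc n*((a+2*b)*(x^Suc n*(1-x)^(2*n)) + (-b)*(x^n*(1-x)^(2*n+1)))) has_integral
     2/3*z^Suc n*((a+2*b) * (fact (Suc n) * fact (2*n) / fact (Suc n + 2*n + 1))
           + (-b) * (fact n * fact (2*n+1) / fact (n + (2*n+1) + 1)))) {0..1}"
    by (intro has_integral_mult_right has_integral_add beta_nat)
  then have "((\<lambda>x. 2/3*z^Suc n*((a+2*b)*(x^Suc n*(1-x)^(2*n)) + (-b)*(x^n*(1-x)^(2*n+1)))) has_integral
     ((a*real(Suc n)+b)*z^(Suc n)/(real(Suc n)*(2*real(Suc n)-1)*real(3*Suc n choose Suc n)))) {0..1}"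
    by (simp only: famA_val)
  moreover have "2/3*z*((a+2*b)*x - b*(1-x)) * (z*x*(1-x)^2)^n =
      2/3*z^Suc n*((a+2*b)*(x^Suc n*(1-x)^(2*n)) + (-b)*(x^n*(1-x)^(2*n+1)))" for x :: real
  proof -
    have p: "(z*x*(1-x)^2)^n = z^n*x^n*(1-x)^(2*n)" by (simp only: power_mult_distrib power_mult)
    show ?thesis by (subst p) (simp add: algebra_simps)
  qed
  ultimately show ?thesis by (simp only:)
qed

lemma famB_val:
  fixes a b z :: real
  shows "z^Suc n*((a+2*b)/4 * (fact (2*n) * fact (2*n) / fact (2*n + 2*n + 1))
           + (-b-(a+2*b)/2) * (fact (2*n+1) * fact (2*n+1) / fact ((2*n+1) + (2*n+1) + 1)))
       = (a*real(Suc n)+b)*z^(Suc n)/(real(Suc n)*(2*real(Suc n)-1)*real(4*Suc n choose (2*Suc n)))"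
proof -
  define N where "N = real n"
  define E where "E = (fact (2*n)::real)"
  define T where "T = (fact (4*n)::real)"
  have pos: "E > 0" "T > 0" "N \<ge> 0" unfolding E_def T_def N_def by simp_all
  have e1: "fact (2*n + 2*n + 1) = (4*N+1)*T" 
  proof -
    have "2*n + 2*n + 1 = Suc (4*n)" by simp
    then show ?thesis unfolding T_def N_def by (simp add: algebra_simps)
  qed
  have e1': "fact ((2*n+1) + (2*n+1) + 1) = (4*N+3)*(4*N+2)*(4*N+1)*T" 
  proof -
    have "(2*n+1) + (2*n+1) + 1 = Suc (Suc (Suc (4*n)))" by simp
    then show ?thesis unfolding T_def N_def by (simp add: algebra_simps)
  qed
  have e2: "fact (4*Suc n) = (4*N+4)*(4*N+3)*(4*N+2)*(4*N+1)*T"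
  proof -
    have "4*Suc n = Suc (Suc (Suc (Suc (4*n))))" by simp
    show ?thesis unfolding T_def N_def by (subst \<open>4*Suc n = _\<close>) (simp add: algebra_simps)
  qed
  have e3: "fact (2*Suc n) = (2*N+2)*(2*N+1)*E"
  proof -
    have "2*Suc n = Suc (Suc (2*n))" by simp
    show ?thesis unfolding E_def N_def by (subst \<open>2*Suc n = _\<close>) (simp add: algebra_simps)
  qed
  have e4: "fact (2*n+1) = (2*N+1)*E" unfolding E_def N_def by (simp add: algebra_simps)
  have C: "real(4*Suc n choose (2*Suc n)) = fact (4*Suc n) / (fact (2*Suc n) * fact (2 * Suc n))"
    by (subst binomial_fact) (auto simp: algebra_simps)
  have R: "real (Suc n) = N + 1" unfolding N_def by simp
  obtain p1 p2 p3 p4 q r1 r2 where d: "p1 = 4*N+1" "p2 = 4*N+2" "p3=4*N+3" "p4=4*N+4" "q = N+1" "r1 = 2*N+1" "r2 = 2*N+2" by blast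
  have nz: "p1 > 0" "p2 > 0" "p3 > 0" "p4 > 0" "q > 0" "r1 > 0" "r2 > 0" using pos d by auto
  have r: "2*(N+1)-1 = r1" using d by simp
  show ?thesis
    unfolding C e1 e1' e2 e3 e4 R E_def[symmetric]
    unfolding r unfolding d[symmetric] using pos nz
    apply (simp add: field_simps)
    unfolding d by algebra
qed

lemma famB_int:
  fixes a b z :: real
  shows "((\<lambda>x. z*((a+2*b)/4 + (-b-(a+2*b)/2)*(x*(1-x))) * (z*(x*(1-x))^2)^n) has_integral
     ((a*real(Suc n)+b)*z^(Suc n)/(real(Suc n)*(2*real(Suc n)-1)*real(4*Suc n choose (2*Suc n))))) {0..1}"
proof -
  have "((\<lambda>x. z^Suc n*((a+2*b)/4*(x^(2*n)*(1-x)^(2*n)) + (-b-(a+2*b)/2)*(x^(2*n+1)*(1-x)^(2*n+1)))) has_integral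
     z^Suc n*((a+2*b)/4 * (fact (2*n) * fact (2*n) / fact (2*n + 2*n + 1))
           + (-b-(a+2*b)/2) * (fact (2*n+1) * fact (2*n+1) / fact ((2*n+1) + (2*n+1) + 1)))) {0..1}"
    by (intro has_integral_mult_right has_integral_add beta_nat)
  then have "((\<lambda>x. z^Suc n*((a+2*b)/4*(x^(2*n)*(1-x)^(2*n)) + (-b-(a+2*b)/2)*(x^(2*n+1)*(1-x)^(2*n+1)))) has_integral
     ((a*real(Suc n)+b)*z^(Suc n)/(real(Suc n)*(2*real(Suc n)-1)*real(4*Suc n choose (2*Suc n))))) {0..1}"
    by (simp only: famB_val)
  moreover have "z*((a+2*b)/4 + (-b-(a+2*b)/2)*(x*(1-x))) * (z*(x*(1-x))^2)^n =
      z^Suc n*((a+2*b)/4*(x^(2*n)*(1-x)^(2*n)) + (-b-(a+2*b)/2)*(x^(2*n+1)*(1-x)^(2*n+1)))" for x :: real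
  proof -
    have p: "(z*(x*(1-x))^2)^n = z^n*x^(2*n)*(1-x)^(2*n)" by (simp only: power_mult_distrib power_mult)
    show ?thesis by (subst p, simp add: algebra_simps, simp add: field_simps)
  qed
  ultimately show ?thesis by (simp only:)
qed



lemma famA_sums:
  fixes a b z I :: real
  assumes z: "\<bar>z\<bar> < 4"
    and I: "((\<lambda>x. 2/3*z*((a+2*b)*x - b*(1-x)) / (1 - z*x*(1-x)^2)) has_integral I) {0..1}"
  shows "(\<lambda>n. (a*real(Suc n)+b)*z^(Suc n)/(real(Suc n)*(2*real(Suc n)-1)*real(3*Suc n choose Suc n))) sums I"
proof (rule series_from_integrals[where c = "\<bar>z\<bar>/4"])
  show "continuous_on {0..1} (\<lambda>x. 2/3*z*((a+2*b)*x - b*(1-x)))" by (intro continuous_intros)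
  show "continuous_on {0..1} (\<lambda>x. z*x*(1-x)^2)" by (intro continuous_intros)
  show "\<bar>z\<bar>/4 < 1" "0 \<le> \<bar>z\<bar>/4" using z by auto
  show "\<bar>z*x*(1-x)^2\<bar> \<le> \<bar>z\<bar>/4" if "x \<in> {0..1}" for x
  proof -
    have x: "0 \<le> x" "x \<le> 1" using that by auto
    have "x*(1-x)^2 \<le> x*(1-x)" using x
      by (simp add: power2_eq_square mult_left_le mult_nonneg_nonneg mult_left_mono)
    also have "\<dots> \<le> 1/4" proof -
      have "x*(1-x) = 1/4 - (x-1/2)^2" by (simp add: power2_eq_square algebra_simps)
      then show ?thesis using zero_le_power2[of "x - 1/2"] by linarith
    qed
    finally have "x*(1-x)^2 \<le> 1/4" .
    moreover have "0 \<le> x*(1-x)^2" using x by simp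
    ultimately have "\<bar>z\<bar> * (x*(1-x)^2) \<le> \<bar>z\<bar> * (1/4)" "\<bar>z*x*(1-x)^2\<bar> = \<bar>z\<bar> * (x*(1-x)^2)"
      by (simp_all only: mult_left_mono abs_ge_zero) (metis abs_mult abs_of_nonneg mult.assoc)
    then show ?thesis by simp
  qed
  show "((\<lambda>x. 2/3*z*((a+2*b)*x - b*(1-x)) * (z*x*(1-x)^2)^n) has_integral
     ((a*real(Suc n)+b)*z^(Suc n)/(real(Suc n)*(2*real(Suc n)-1)*real(3*Suc n choose Suc n)))) {0..1}" for n
    by (rule famA_int)
qed (fact I)

lemma famB_sums:
  fixes a b z I :: real
  assumes z: "\<bar>z\<bar> < 16"
    and I: "((\<lambda>x. z*((a+2*b)/4 + (-b-(a+2*b)/2)*(x*(1-x))) / (1 - z*(x*(1-x))^2)) has_integral I) {0..1}"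
  shows "(\<lambda>n. (a*real(Suc n)+b)*z^(Suc n)/(real(Suc n)*(2*real(Suc n)-1)*real(4*Suc n choose (2*Suc n)))) sums I"
proof (rule series_from_integrals[where c = "\<bar>z\<bar>/16"])
  show "continuous_on {0..1} (\<lambda>x. z*((a+2*b)/4 + (-b-(a+2*b)/2)*(x*(1-x))))" by (intro continuous_intros)
  show "continuous_on {0..1} (\<lambda>x. z*(x*(1-x))^2)" by (intro continuous_intros)
  show "\<bar>z\<bar>/16 < 1" "0 \<le> \<bar>z\<bar>/16" using z by auto
  show "\<bar>z*(x*(1-x))^2\<bar> \<le> \<bar>z\<bar>/16" if "x \<in> {0..1}" for x
  proof -
    have x: "0 \<le> x" "x \<le> 1" using that by auto
    have h: "x*(1-x) \<le> 1/4" proof -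
      have "x*(1-x) = 1/4 - (x-1/2)^2" by (simp add: power2_eq_square algebra_simps)
      then show ?thesis using zero_le_power2[of "x - 1/2"] by linarith
    qed
    have h0: "0 \<le> x*(1-x)" using x by simp
    have "(x*(1-x))^2 \<le> (1/4)^2" using h h0 by (rule power_mono)
    then have "(x*(1-x))^2 \<le> 1/16" by (simp add: power2_eq_square)
    then have "\<bar>z\<bar> * (x*(1-x))^2 \<le> \<bar>z\<bar> * (1/16)" "\<bar>z*(x*(1-x))^2\<bar> = \<bar>z\<bar> * (x*(1-x))^2"
      by (simp_all only: mult_left_mono abs_ge_zero) (metis abs_mult abs_of_nonneg zero_le_power2)
    then show ?thesis by simp
  qed
  show "((\<lambda>x. z*((a+2*b)/4 + (-b-(a+2*b)/2)*(x*(1-x))) * (z*(x*(1-x))^2)^n) has_integral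
     ((a*real(Suc n)+b)*z^(Suc n)/(real(Suc n)*(2*real(Suc n)-1)*real(4*Suc n choose (2*Suc n))))) {0..1}" for n
    by (rule famB_int)
qed (fact I)



lemma ftc01:
  fixes G f :: "real \<Rightarrow> real"
  assumes "\<And>x. x \<in> {0..1} \<Longrightarrow> (G has_real_derivative f x) (at x)" and "G 1 - G 0 = I"
  shows "(f has_integral I) {0..1}"
proof -
  have "(f has_integral (G 1 - G 0)) {0..1}"
    by (rule fundamental_theorem_of_calculus)
       (auto simp: has_real_derivative_iff_has_vector_derivative[symmetric]
             intro!: has_field_derivative_at_within assms(1))
  then show ?thesis using assms(2) by simp
qed

lemma arctan_sqrt3: "arctan (sqrt 3) = pi/3"
  using arctan_tan[of "pi/3"] tan_60 by (simp add: pi_gt_zero)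
lemma arctan_inv_sqrt3: "arctan (1/sqrt 3) = pi/6"
  using arctan_tan[of "pi/6"] tan_30 by (simp add: pi_gt_zero)

lemma int1: "((\<lambda>x::real. 2/3*(1/2)*((5+2*(-2))*x - (-2)*(1-x)) / (1 - (1/2)*x*(1-x)^2)) has_integral (pi/6)) {0..1}"
proof (rule ftc01[where G = "\<lambda>x. 2/3 * arctan x"])
  fix x :: real assume x: "x \<in> {0..1}"
  have f: "1 - (1/2)*x*(1-x)^2 = (2-x)*(1+x^2)/2" by (simp add: power2_eq_square algebra_simps)
  obtain p q where pq: "p = 2-x" "q = 1+x^2" by blast
  have nz: "p \<noteq> 0" "q \<noteq> 0" using x zero_le_power2[of x] pq by (auto, linarith)
  show "((\<lambda>x::real. 2/3 * arctan x) has_real_derivative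
     2/3*(1/2)*((5+2*(-2))*x - (-2)*(1-x)) / (1 - (1/2)*x*(1-x)^2)) (at x)"
    apply (rule derivative_eq_intros refl)+
    unfolding f unfolding pq[symmetric] using nz apply (simp add: field_simps) unfolding pq by algebra
qed simp

lemma int2: "((\<lambda>x::real. 2/3*(8/3)*((7+2*(-3))*x - (-3)*(1-x)) / (1 - (8/3)*x*(1-x)^2)) has_integral (8 * sqrt 3 / 9 * pi)) {0..1}"
proof (rule ftc01[where G = "\<lambda>x. 16/(3 * sqrt 3) * arctan ((4*x-1)/sqrt 3)"])
  fix x :: real assume x: "x \<in> {0..1}"
  have f: "1 - (8/3)*x*(1-x)^2 = (3-2*x)*(4*x^2-2*x+1)/3" by (simp add: power2_eq_square field_simps)
  have "4*x^2-2*x+1 = 3/4 + (2*x-1/2)^2" by (simp add: power2_eq_square algebra_simps)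
  then have q0: "4*x^2-2*x+1 > 0" using zero_le_power2[of "2*x-1/2"] by linarith
  obtain p q s where pq: "p = 3-2*x" "q = 4*x^2-2*x+1" "s = sqrt 3" by blast
  have s2: "s^2 = 3" using pq by simp
  have s0: "sqrt 3 \<noteq> 0" by simp
  have nz: "p \<noteq> 0" "q \<noteq> 0" "s \<noteq> 0" using x q0 pq by auto
  have h: "1 + ((4*x-1)/s)^2 = 4*q/3" "s * s = 3"
    using s2 nz pq by (auto simp: power_divide field_simps power2_eq_square)
  show "((\<lambda>x::real. 16/(3 * sqrt 3) * arctan ((4*x-1)/sqrt 3)) has_real_derivative
     2/3*(8/3)*((7+2*(-3))*x - (-3)*(1-x)) / (1 - (8/3)*x*(1-x)^2)) (at x)"
    apply (rule derivative_eq_intros refl s0)+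
    unfolding f unfolding pq[symmetric] h using nz apply (simp add: field_simps) unfolding pq(1,2) by (simp add: algebra_simps)
next
  have e: "(4*1-1)/sqrt 3 = sqrt 3" "(4*0-1)/sqrt 3 = -(1/sqrt 3)" by (simp_all add: real_div_sqrt)
  have hs: "sqrt 3 * (sqrt 3 * c) = 3 * c" for c by (simp add: mult.assoc[symmetric])
  show "16/(3 * sqrt 3) * arctan ((4*1-1)/sqrt 3) - 16/(3 * sqrt 3) * arctan ((4*0-1)/sqrt 3) = 8 * sqrt 3 / 9 * pi"
    unfolding e arctan_minus arctan_sqrt3 arctan_inv_sqrt3 by (simp add: field_simps hs)
qed

lemma int3: "((\<lambda>x::real. 2/3*(-1/4)*((28+2*(-11))*x - (-11)*(1-x)) / (1 - (-1/4)*x*(1-x)^2)) has_integral (- 2 * ln 2)) {0..1}"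
proof (rule ftc01[where G = "\<lambda>x. -(2/3) * (2 * ln (1+x) - ln (x^2-3*x+4))"])
  fix x :: real assume x: "x \<in> {0..1}"
  have f: "1 - (-1/4)*x*(1-x)^2 = (1+x)*(x^2-3*x+4)/4" by (simp add: power2_eq_square algebra_simps)
  have "x^2-3*x+4 = 7/4 + (x-3/2)^2" by (simp add: power2_eq_square algebra_simps)
  then have q0: "x^2-3*x+4 > 0" using zero_le_power2[of "x-3/2"] by linarith
  have p0: "1 + x > 0" using x by auto
  obtain p q where pq: "p = 1+x" "q = x^2-3*x+4" by blast
  have nz: "p > 0" "q > 0" using p0 q0 pq by auto
  show "((\<lambda>x::real. -(2/3) * (2 * ln (1+x) - ln (x^2-3*x+4))) has_real_derivative
     2/3*(-1/4)*((28+2*(-11))*x - (-11)*(1-x)) / (1 - (-1/4)*x*(1-x)^2)) (at x)"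
    apply (rule derivative_eq_intros refl p0 q0)+
    unfolding f unfolding pq[symmetric] using nz apply (simp add: field_simps) unfolding pq by algebra
next
  have "ln (4::real) = 2 * ln 2" using ln_realpow[of 2 2] by simp
  then show "-(2/3) * (2 * ln (1+1) - ln (1^2-3*1+4)) - (-(2/3) * (2 * ln (1+0) - ln (0^2-3*0+4))) = - 2 * ln (2::real)"
    by simp
qed

lemma int4: "((\<lambda>x::real. (-1/3)*((7+2*(-2))/4 + (-(-2)-(7+2*(-2))/2)*(x*(1-x))) / (1 - (-1/3)*(x*(1-x))^2)) has_integral (- ln 3 / 4)) {0..1}"
proof (rule ftc01[where G = "\<lambda>x. -(1/8) * (ln (x^2+x+1) - ln (x^2-3*x+3))"])
  fix x :: real assume x: "x \<in> {0..1}"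
  have f: "1 - (-1/3)*(x*(1-x))^2 = (x^2+x+1)*(x^2-3*x+3)/3" by (simp add: power2_eq_square field_simps)
  have "x^2-3*x+3 = 3/4 + (x-3/2)^2" by (simp add: power2_eq_square algebra_simps)
  then have q0: "x^2-3*x+3 > 0" using zero_le_power2[of "x-3/2"] by linarith
  have xb: "0 \<le> x" using x by auto
  have p0: "x^2+x+1 > 0" using xb zero_le_power2[of x] by linarith
  obtain p q where pq: "p = x^2+x+1" "q = x^2-3*x+3" by blast
  have nz: "p > 0" "q > 0" using p0 q0 pq by auto
  show "((\<lambda>x. -(1/8) * (ln (x^2+x+1) - ln (x^2-3*x+3))) has_real_derivative
     (-1/3)*((7+2*(-2))/4 + (-(-2)-(7+2*(-2))/2)*(x*(1-x))) / (1 - (-1/3)*(x*(1-x))^2)) (at x)"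
    apply (rule derivative_eq_intros refl p0 q0)+
    unfolding f unfolding pq[symmetric] using nz apply (simp add: field_simps) unfolding pq by algebra
qed simp

lemma int5: "((\<lambda>x::real. 1*((10+2*(-3))/4 + (-(-3)-(10+2*(-3))/2)*(x*(1-x))) / (1 - 1*(x*(1-x))^2)) has_integral (2 * sqrt 3 / 9 * pi)) {0..1}"
proof (rule ftc01[where G = "\<lambda>x. 2/sqrt 3 * arctan ((2*x-1)/sqrt 3)"])
  fix x :: real assume x: "x \<in> {0..1}"
  have f: "1 - 1*(x*(1-x))^2 = (x^2-x+1)*(1+x-x^2)" by (simp add: power2_eq_square field_simps)
  have "x^2-x+1 = 3/4 + (x-1/2)^2" by (simp add: power2_eq_square algebra_simps)
  then have q0: "x^2-x+1 > 0" using zero_le_power2[of "x-1/2"] by linarith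
  have "x^2 \<le> x" using x by (simp add: power2_eq_square mult_left_le)
  then have p0: "1+x-x^2 > 0" by linarith
  obtain p q s where pq: "p = 1+x-x^2" "q = x^2-x+1" "s = sqrt 3" by blast
  have s2: "s^2 = 3" using pq by simp
  have s0: "sqrt 3 \<noteq> 0" by simp
  have nz: "p \<noteq> 0" "q \<noteq> 0" "s \<noteq> 0" using p0 q0 pq by auto
  have h: "1 + ((2*x-1)/s)^2 = 4*q/3" "s * s = 3"
    using s2 nz pq by (auto simp: power_divide field_simps power2_eq_square)
  show "((\<lambda>x. 2/sqrt 3 * arctan ((2*x-1)/sqrt 3)) has_real_derivative
     1*((10+2*(-3))/4 + (-(-3)-(10+2*(-3))/2)*(x*(1-x))) / (1 - 1*(x*(1-x))^2)) (at x)"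
    apply (rule derivative_eq_intros refl s0)+
    unfolding f unfolding pq[symmetric] h using nz apply (simp add: field_simps) unfolding pq(1,2) by algebra
next
  have e: "(2*1-1)/sqrt 3 = 1/sqrt 3" "(2*0-1)/sqrt 3 = -(1/sqrt 3)" by simp_all
  have hs: "sqrt 3 * (sqrt 3 * c) = 3 * c" for c by (simp add: mult.assoc[symmetric])
  show "2/sqrt 3 * arctan ((2*1-1)/sqrt 3) - 2/sqrt 3 * arctan ((2*0-1)/sqrt 3) = 2 * sqrt 3 / 9 * pi"
    unfolding e arctan_minus arctan_inv_sqrt3 by (simp add: field_simps hs)
qed

lemma int6: "((\<lambda>x::real. 4*((3+2*(-1))/4 + (-(-1)-(3+2*(-1))/2)*(x*(1-x))) / (1 - 4*(x*(1-x))^2)) has_integral (pi / 2)) {0..1}"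
proof (rule ftc01[where G = "\<lambda>x. arctan (2*x-1)"])
  fix x :: real assume x: "x \<in> {0..1}"
  have f: "1 - 4*(x*(1-x))^2 = (1-2*x+2*x^2)*(1+2*x-2*x^2)" by (simp add: power2_eq_square field_simps)
  have "1-2*x+2*x^2 = 1/2 + 2*(x-1/2)^2" by (simp add: power2_eq_square algebra_simps)
  then have q0: "1-2*x+2*x^2 > 0" using zero_le_power2[of "x-1/2"] by linarith
  have "x^2 \<le> x" using x by (simp add: power2_eq_square mult_left_le)
  then have p0: "1+2*x-2*x^2 > 0" by linarith
  obtain p q where pq: "p = 1+2*x-2*x^2" "q = 1-2*x+2*x^2" by blast
  have nz: "p \<noteq> 0" "q \<noteq> 0" using p0 q0 pq by auto
  have h: "1 + (2*x-1)^2 = 2*q" using pq by (simp add: power2_eq_square algebra_simps)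
  show "((\<lambda>x. arctan (2*x-1)) has_real_derivative
     4*((3+2*(-1))/4 + (-(-1)-(3+2*(-1))/2)*(x*(1-x))) / (1 - 4*(x*(1-x))^2)) (at x)"
    apply (rule derivative_eq_intros refl)+
    unfolding f h unfolding pq[symmetric] using nz apply (simp add: field_simps) unfolding pq by algebra
qed (simp add: arctan_minus)

lemma int7: "((\<lambda>x::real. (-2)*((-3+2*(1/2))/4 + (-(1/2)-(-3+2*(1/2))/2)*(x*(1-x))) / (1 - (-2)*(x*(1-x))^2)) has_integral (pi / 4)) {0..1}"
proof (rule ftc01[where G = "\<lambda>x. 1/2 * arctan ((2*x-1)/(1+2*x-2*x^2))"])
  fix x :: real assume x: "x \<in> {0..1}"
  have "x^2 \<le> x" using x by (simp add: power2_eq_square mult_left_le)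
  then have d0: "1+2*x-2*x^2 > 0" by linarith
  have e0: "1 - (-2)*(x*(1-x))^2 > 0" by (simp add: add_pos_nonneg)
  obtain d e where de: "d = 1+2*x-2*x^2" "e = 1 - (-2)*(x*(1-x))^2" by blast
  have nz: "d \<noteq> 0" "e \<noteq> 0" using d0 e0 de by auto
  have d0': "1+2*x-2*x^2 \<noteq> 0" using d0 by simp
  have h: "1 + ((2*x-1)/d)^2 = 2*e/d^2" using nz
    apply (simp add: power2_eq_square field_simps) unfolding de by algebra
  show "((\<lambda>x. 1/2 * arctan ((2*x-1)/(1+2*x-2*x^2))) has_real_derivative
     (-2)*((-3+2*(1/2))/4 + (-(1/2)-(-3+2*(1/2))/2)*(x*(1-x))) / (1 - (-2)*(x*(1-x))^2)) (at x)"
    apply (rule derivative_eq_intros refl d0')+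
    unfolding de[symmetric] h using nz apply (simp add: field_simps) unfolding de by algebra
qed (simp add: arctan_minus)

lemma int8: "((\<lambda>x::real. (1/4)*((14+2*(-3))/4 + (-(-3)-(14+2*(-3))/2)*(x*(1-x))) / (1 - (1/4)*(x*(1-x))^2)) has_integral (2 / 3 * ln 2)) {0..1}"
proof (rule ftc01[where G = "\<lambda>x. 1/3 * (ln (1+x) - ln (2-x))"])
  fix x :: real assume x: "x \<in> {0..1}"
  have f: "1 - (1/4)*(x*(1-x))^2 = (x^2-x+2)*(2-x)*(1+x)/4" by (simp add: power2_eq_square field_simps)
  have "x^2 \<le> x" using x by (simp add: power2_eq_square mult_left_le)
  have "0 \<le> x^2" by simp
  have xb: "x \<le> 1" using x by auto
  then have r0: "x^2-x+2 > 0" using \<open>0 \<le> x^2\<close> by linarith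
  have p0: "1+x > 0" "2-x > 0" using x by auto
  obtain p q r where pq: "p = 1+x" "q = 2-x" "r = x^2-x+2" by blast
  have nz: "p \<noteq> 0" "q \<noteq> 0" "r \<noteq> 0" using p0 r0 pq by auto
  show "((\<lambda>x. 1/3 * (ln (1+x) - ln (2-x))) has_real_derivative
     (1/4)*((14+2*(-3))/4 + (-(-3)-(14+2*(-3))/2)*(x*(1-x))) / (1 - (1/4)*(x*(1-x))^2)) (at x)"
    apply (rule derivative_eq_intros refl p0)+
    unfolding f unfolding pq[symmetric] using nz apply (simp add: field_simps) unfolding pq by algebra
qed simp



lemma frac_aux: "(a::real) * (1/p) / (d1 * d2) = a / (d1 * p * d2)"
  by (simp add: divide_inverse inverse_mult_distrib mult_ac)

lemma S1: "(\<lambda>n. let k = Suc n in (5 * real k - 2) /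
            (real k * (2 * real k - 1) * 2 ^ k * real (3 * k choose k))) sums (pi / 6)"
proof -
  have "(\<lambda>n. (5*real(Suc n)+(-2))*(1/2)^(Suc n)/(real(Suc n)*(2*real(Suc n)-1)*real(3*Suc n choose Suc n))) sums (pi/6)"
    by (rule famA_sums[OF _ int1]) simp
  then show ?thesis by (simp add: Let_def power_one_over field_simps)
qed

lemma S2: "(\<lambda>n. let k = Suc n in ((7 * real k - 3) * 8 ^ k) /
            (real k * (2 * real k - 1) * 3 ^ k * real (3 * k choose k))) sums (8 * sqrt 3 / 9 * pi)"
proof -
  have "(\<lambda>n. (7*real(Suc n)+(-3))*(8/3)^(Suc n)/(real(Suc n)*(2*real(Suc n)-1)*real(3*Suc n choose Suc n))) sums (8 * sqrt 3 / 9 * pi)"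
    by (rule famA_sums[OF _ int2]) simp
  then show ?thesis by (simp add: Let_def power_divide field_simps)
qed

lemma S3: "(\<lambda>n. let k = Suc n in (28 * real k - 11) /
            (real k * (2 * real k - 1) * (-4) ^ k * real (3 * k choose k))) sums (- 2 * ln 2)"
proof -
  have "(\<lambda>n. (28*real(Suc n)+(-11))*(-1/4)^(Suc n)/(real(Suc n)*(2*real(Suc n)-1)*real(3*Suc n choose Suc n))) sums (- 2 * ln 2)"
    by (rule famA_sums[OF _ int3]) simp
  moreover have "(-1/4::real)^k = 1/(-4)^k" for k
  proof -
    have "(-1/4::real)^k = (1/(-4))^k" by simp
    then show ?thesis by (simp only: power_one_over)
  qed
  ultimately show ?thesis by (simp only: Let_def frac_aux diff_conv_add_uminus)
qed

lemma S4: "(\<lambda>n. let k = Suc n in (7 * real k - 2) /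
            (real k * (2 * real k - 1) * (-3) ^ k * real (4 * k choose (2 * k)))) sums (- ln 3 / 4)"
proof -
  have "(\<lambda>n. (7*real(Suc n)+(-2))*(-1/3)^(Suc n)/(real(Suc n)*(2*real(Suc n)-1)*real(4*Suc n choose (2*Suc n)))) sums (- ln 3 / 4)"
    by (rule famB_sums[OF _ int4]) simp
  moreover have "(-1/3::real)^k = 1/(-3)^k" for k
  proof -
    have "(-1/3::real)^k = (1/(-3))^k" by simp
    then show ?thesis by (simp only: power_one_over)
  qed
  ultimately show ?thesis by (simp only: Let_def frac_aux diff_conv_add_uminus)
qed

lemma S5: "(\<lambda>n. let k = Suc n in (10 * real k - 3) /
            (real k * (2 * real k - 1) * real (4 * k choose (2 * k)))) sums (2 * sqrt 3 / 9 * pi)"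
proof -
  have "(\<lambda>n. (10*real(Suc n)+(-3))*1^(Suc n)/(real(Suc n)*(2*real(Suc n)-1)*real(4*Suc n choose (2*Suc n)))) sums (2 * sqrt 3 / 9 * pi)"
    by (rule famB_sums[OF _ int5]) simp
  then show ?thesis by (simp add: Let_def field_simps)
qed

lemma S6: "(\<lambda>n. let k = Suc n in ((3 * real k - 1) * 4 ^ k) /
            (real k * (2 * real k - 1) * real (4 * k choose (2 * k)))) sums (pi / 2)"
proof -
  have "(\<lambda>n. (3*real(Suc n)+(-1))*4^(Suc n)/(real(Suc n)*(2*real(Suc n)-1)*real(4*Suc n choose (2*Suc n)))) sums (pi / 2)"
    by (rule famB_sums[OF _ int6]) simp
  then show ?thesis by (simp add: Let_def field_simps)
qed

lemma S7: "(\<lambda>n. let k = Suc n in ((6 * real k - 1) * (-2) ^ (k - 1)) /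
            (real k * (2 * real k - 1) * real (4 * k choose (2 * k)))) sums (pi / 4)"
proof -
  have "(\<lambda>n. ((-3)*real(Suc n)+(1/2))*(-2)^(Suc n)/(real(Suc n)*(2*real(Suc n)-1)*real(4*Suc n choose (2*Suc n)))) sums (pi / 4)"
    by (rule famB_sums[OF _ int7]) simp
  moreover have "((-3)*real(Suc n)+(1/2))*(-2::real)^(Suc n) = (6*real(Suc n)-1)*(-2)^(Suc n - 1)" for n
    by (simp add: algebra_simps)
  ultimately show ?thesis by (simp only: Let_def)
qed

lemma S8: "(\<lambda>n. let k = Suc n in (14 * real k - 3) /
            (real k * (2 * real k - 1) * 4 ^ k * real (4 * k choose (2 * k)))) sums (2 / 3 * ln 2)"
proof -
  have "(\<lambda>n. (14*real(Suc n)+(-3))*(1/4)^(Suc n)/(real(Suc n)*(2*real(Suc n)-1)*real(4*Suc n choose (2*Suc n)))) sums (2 / 3 * ln 2)"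
    by (rule famB_sums[OF _ int8]) simp
  then show ?thesis by (simp add: Let_def power_one_over field_simps)
qed



lemma tele_sum:
  fixes t s G :: "nat \<Rightarrow> real"
  assumes "s sums S" "\<And>n. t n = c * s n + (G (Suc (Suc n)) - G (Suc n))" "(\<lambda>n. G (Suc n)) \<longlonglongrightarrow> 0"
  shows "t sums (c*S - G 1)"
proof -
  have "(\<lambda>n. G (Suc (Suc n)) - G (Suc n)) sums (0 - G (Suc 0))"
    using telescope_sums[OF assms(3)] by simp
  then have "(\<lambda>n. c * s n + (G (Suc (Suc n)) - G (Suc n))) sums (c*S + (0 - G 1))"
    by (intro sums_add sums_mult assms(1)) simp
  moreover have "t = (\<lambda>n. c * s n + (G (Suc (Suc n)) - G (Suc n)))" by (rule ext) (rule assms(2))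
  ultimately show ?thesis by simp
qed

lemma cb_step:
  "real ((4*Suc k) choose (2*Suc k)) * ((2*real k+1)^2*(2*real k+2)^2) =
   real (4*k choose (2*k)) * ((4*real k+1)*(4*real k+2)*(4*real k+3)*(4*real k+4))"
proof -
  define K where "K = real k"
  define E where "E = (fact (2*k)::real)"
  define T where "T = (fact (4*k)::real)"
  have pos: "E > 0" "T > 0" "K \<ge> 0" unfolding E_def T_def K_def by simp_all
  have e2: "fact (4*Suc k) = (4*K+4)*(4*K+3)*(4*K+2)*(4*K+1)*T"
  proof -
    have "4*Suc k = Suc (Suc (Suc (Suc (4*k))))" by simp
    show ?thesis unfolding T_def K_def by (subst \<open>4*Suc k = _\<close>) (simp add: algebra_simps)
  qed
  have e3: "fact (2*Suc k) = (2*K+2)*(2*K+1)*E"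
  proof -
    have "2*Suc k = Suc (Suc (2*k))" by simp
    show ?thesis unfolding E_def K_def by (subst \<open>2*Suc k = _\<close>) (simp add: algebra_simps)
  qed
  have C1: "real(4*Suc k choose (2*Suc k)) = fact (4*Suc k) / (fact (2*Suc k) * fact (2 * Suc k))"
    by (subst binomial_fact) (auto simp: algebra_simps)
  have C0: "real(4*k choose (2*k)) = T / (E * E)"
    unfolding T_def E_def by (subst binomial_fact) (auto simp: algebra_simps)
  obtain p q where d: "p = 2*K+1" "q = 2*K+2" by blast
  have nz: "p > 0" "q > 0" using pos d by auto
  show ?thesis
    unfolding C1 C0 e2 e3 unfolding K_def[symmetric] unfolding d[symmetric] using pos nz
    apply (simp add: field_simps)
    unfolding d by algebra
qed

lemma cb_lower: "real (4*k choose (2*k)) \<ge> 16^k / (4*real k+1)"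
proof -
  have "(2::nat)^(4*k) = (\<Sum>i\<le>4*k. (4*k) choose i)" by (simp add: choose_row_sum)
  also have "\<dots> \<le> (\<Sum>i\<le>4*k. (4*k) choose (2*k))"
  proof (intro sum_mono)
    fix i show "(4*k) choose i \<le> (4*k) choose (2*k)"
      using binomial_maximum'[of "2*k" i] by (simp add: mult.assoc)
  qed
  also have "\<dots> = (4*k+1) * ((4*k) choose (2*k))" by simp
  finally have "real ((2::nat)^(4*k)) \<le> real ((4*k+1) * ((4*k) choose (2*k)))" by linarith
  then have "(2::real)^(4*k) \<le> (4*real k+1) * real ((4*k) choose (2*k))"
    by (simp add: algebra_simps)
  moreover have "(2::real)^(4*k) = 16^k" by (simp add: power_mult)
  ultimately have "16^k \<le> (4*real k+1) * real ((4*k) choose (2*k))" by simp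
  then show ?thesis by (simp add: divide_le_eq add_pos_nonneg mult.commute)
qed


lemma G_lim:
  fixes R :: "real \<Rightarrow> real" and z :: real
  assumes "(\<lambda>n. \<bar>R (real (Suc n))\<bar> * (4*real (Suc n)+1) * (\<bar>z\<bar>/16)^(Suc n)) \<longlonglongrightarrow> 0"
  shows "(\<lambda>n. R (real (Suc n)) * z^(Suc n) / real(4*Suc n choose (2*Suc n))) \<longlonglongrightarrow> 0"
proof (rule Lim_null_comparison[OF _ assms])
  show "\<forall>\<^sub>F n in sequentially. norm (R (real (Suc n)) * z^(Suc n) / real(4*Suc n choose (2*Suc n)))
     \<le> \<bar>R (real (Suc n))\<bar> * (4*real (Suc n)+1) * (\<bar>z\<bar>/16)^(Suc n)"
  proof (intro always_eventually allI)
    fix n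
    define k where "k = Suc n"
    define B where "B = real(4*k choose (2*k))"
    have lb: "B \<ge> 16^k / (4*real k+1)" unfolding B_def by (rule cb_lower)
    have p: "16^k / (4*real k+1) > 0" by (simp add: add_pos_nonneg)
    have Bp: "B > 0" using lb p by linarith
    have "1 / B \<le> 1 / (16^k / (4*real k+1))" by (rule divide_left_mono[OF lb]) (use Bp p in auto)
    then have ib: "1 / B \<le> (4*real k+1) / 16^k" by simp
    have "norm (R (real k) * z^k / B) = \<bar>R (real k)\<bar> * \<bar>z\<bar>^k * (1 / B)"
      using Bp by (simp add: abs_mult power_abs)
    also have "\<dots> \<le> \<bar>R (real k)\<bar> * \<bar>z\<bar>^k * ((4*real k+1) / 16^k)"
      by (intro mult_left_mono ib) simp
    also have "\<dots> = \<bar>R (real k)\<bar> * (4*real k+1) * (\<bar>z\<bar>/16)^k"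
      by (simp add: power_divide)
    finally show "norm (R (real (Suc n)) * z^(Suc n) / real(4*Suc n choose (2*Suc n)))
     \<le> \<bar>R (real (Suc n))\<bar> * (4*real (Suc n)+1) * (\<bar>z\<bar>/16)^(Suc n)"
      unfolding k_def B_def .
  qed
qed

lemma tel9_alg:
  fixes K B B' zk :: real
  assumes K: "K \<ge> 1" and B: "B > 0" "B' > 0"
    and rel: "B' * ((2*K+1)^2*(2*K+2)^2) = B * ((4*K+1)*(4*K+2)*(4*K+3)*(4*K+4))"
  shows "(12*K^2+1)*zk/B = 11*((3*K-1)*zk/(K*(2*K-1)*B)) +
    ((4*(K+1)-3)*(4*(K+1)-1)*(-11/3 - 8/3*(K+1) - 2*(K+1)^2)/((K+1)*(2*(K+1)-1)) * (4*zk) / B'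
     - (4*K-3)*(4*K-1)*(-11/3 - 8/3*K - 2*K^2)/(K*(2*K-1)) * zk / B)"
proof -
  obtain a1 a2 a3 where d: "a1 = 2*K-1" "a2 = K+1" "a3 = 2*K+1" by blast
  have nz: "K \<noteq> 0" "a1 \<noteq> 0" "a2 \<noteq> 0" "a3 \<noteq> 0" "B \<noteq> 0" "B' \<noteq> 0" using K B d by auto
  have r: "2*(K+1)-1 = a3" using d by simp
  show ?thesis unfolding r unfolding d(1)[symmetric] d(2)[symmetric]
    using nz apply (simp add: field_simps)
    unfolding d using rel by algebra
qed

lemma choose_4_2: "(4::nat) choose 2 = 6"
  by (simp add: choose_two)

lemma S9: "(\<lambda>n. let k = Suc n in ((12 * real k ^ 2 + 1) * 4 ^ k) /
            real (4 * k choose (2 * k))) sums (11 / 2 * pi + 50 / 3)"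
proof -
  define R where "R K = (4*K-3)*(4*K-1)*(-11/3 - 8/3*K - 2*K^2)/(K*(2*K-1))" for K :: real
  define G where "G k = R (real k) * 4^k / real(4*k choose (2*k))" for k :: nat
  have lim: "(\<lambda>n. G (Suc n)) \<longlonglongrightarrow> 0" unfolding G_def
    by (rule G_lim) (unfold R_def, real_asymp)
  have eq: "((12 * real k ^ 2 + 1) * 4 ^ k) / real (4 * k choose (2 * k)) =
     11 * (((3 * real k - 1) * 4 ^ k) / (real k * (2 * real k - 1) * real (4 * k choose (2 * k))))
     + (G (Suc k) - G k)" if k: "k \<ge> 1" for k
  proof -
    define K where "K = real k"
    define B where "B = real (4*k choose (2*k))"
    define B' where "B' = real (4*Suc k choose (2*Suc k))"
    define zk where "zk = (4::real)^k"
    have rel: "B' * ((2*K+1)^2*(2*K+2)^2) = B * ((4*K+1)*(4*K+2)*(4*K+3)*(4*K+4))"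
      unfolding B_def B'_def K_def by (rule cb_step)
    have B0: "B > 0" "B' > 0" unfolding B_def B'_def using k by auto
    have K1: "K \<ge> 1" using k unfolding K_def by simp
    have h: "real (Suc k) = K+1" "(4::real)^(Suc k) = 4*zk" unfolding K_def zk_def by simp_all
    show ?thesis unfolding G_def R_def h unfolding K_def[symmetric] B_def[symmetric] B'_def[symmetric] zk_def[symmetric]
      by (rule tel9_alg[OF K1 B0 rel])
  qed
  have "(\<lambda>n. let k = Suc n in ((12 * real k ^ 2 + 1) * 4 ^ k) /
            real (4 * k choose (2 * k))) sums (11 * (pi / 2) - G 1)"
  proof (rule tele_sum[OF S6 _ lim])
    fix n
    show "(let k = Suc n in ((12 * real k ^ 2 + 1) * 4 ^ k) / real (4 * k choose (2 * k))) =
      11 * (let k = Suc n in ((3 * real k - 1) * 4 ^ k) /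
            (real k * (2 * real k - 1) * real (4 * k choose (2 * k)))) + (G (Suc (Suc n)) - G (Suc n))"
      unfolding Let_def by (rule eq) simp
  qed
  moreover have "G 1 = -50/3" unfolding G_def R_def by (simp add: choose_4_2)
  ultimately show ?thesis by simp
qed

lemma tel10_alg:
  fixes K B B' zk :: real
  assumes K: "K \<ge> 1" and B: "B > 0" "B' > 0"
    and rel: "B' * ((2*K+1)^2*(2*K+2)^2) = B * ((4*K+1)*(4*K+2)*(4*K+3)*(4*K+4))"
  shows "(K*(126*K+29)*(-2*zk))/B = -8*(((6*K-1)*zk)/(K*(2*K-1)*B)) +
    ((4*(K+1)-3)*(4*(K+1)-1)*(-4/3 - 19/3*(K+1) - 14*(K+1)^2)/((K+1)*(2*(K+1)-1)) * (4*zk) / B'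
     - (4*K-3)*(4*K-1)*(-4/3 - 19/3*K - 14*K^2)/(K*(2*K-1)) * (-2*zk) / B)"
proof -
  obtain a1 a2 a3 where d: "a1 = 2*K-1" "a2 = K+1" "a3 = 2*K+1" by blast
  have nz: "K \<noteq> 0" "a1 \<noteq> 0" "a2 \<noteq> 0" "a3 \<noteq> 0" "B \<noteq> 0" "B' \<noteq> 0" using K B d by auto
  have r: "2*(K+1)-1 = a3" using d by simp
  show ?thesis unfolding r unfolding d(1)[symmetric] d(2)[symmetric]
    using nz apply (simp add: field_simps)
    unfolding d using rel by algebra
qed

lemma S10: "(\<lambda>n. let k = Suc n in (real k * (126 * real k + 29) * (-2) ^ k) /
            real (4 * k choose (2 * k))) sums (- 2 * pi - 65 / 3)"
proof -
  define R where "R K = (4*K-3)*(4*K-1)*(-4/3 - 19/3*K - 14*K^2)/(K*(2*K-1))" for K :: real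
  define G where "G k = R (real k) * (-2)^k / real(4*k choose (2*k))" for k :: nat
  have lim: "(\<lambda>n. G (Suc n)) \<longlonglongrightarrow> 0" unfolding G_def
    by (rule G_lim) (unfold R_def, real_asymp)
  have eq: "(real k * (126 * real k + 29) * (-2) ^ k) / real (4 * k choose (2 * k)) =
     -8 * (((6 * real k - 1) * (-2) ^ (k - 1)) / (real k * (2 * real k - 1) * real (4 * k choose (2 * k))))
     + (G (Suc k) - G k)" if k: "k \<ge> 1" for k
  proof -
    obtain m where m: "k = Suc m" using k by (cases k) auto
    define K where "K = real k"
    define B where "B = real (4*k choose (2*k))"
    define B' where "B' = real (4*Suc k choose (2*Suc k))"
    define zk where "zk = (-2::real)^m"
    have rel: "B' * ((2*K+1)^2*(2*K+2)^2) = B * ((4*K+1)*(4*K+2)*(4*K+3)*(4*K+4))"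
      unfolding B_def B'_def K_def by (rule cb_step)
    have B0: "B > 0" "B' > 0" unfolding B_def B'_def using k by auto
    have K1: "K \<ge> 1" using k unfolding K_def by simp
    have h: "real (Suc k) = K+1" "(-2::real)^(Suc k) = 4*zk" "(-2::real)^k = -2*zk" "(-2::real)^(k-1) = zk"
      unfolding K_def zk_def m by simp_all
    show ?thesis unfolding G_def R_def h unfolding K_def[symmetric] B_def[symmetric] B'_def[symmetric]
      by (rule tel10_alg[OF K1 B0 rel])
  qed
  have sf: "(\<lambda>n. let k = Suc n in (real k * (126 * real k + 29) * (-2) ^ k) /
            real (4 * k choose (2 * k))) sums (-8 * (pi / 4) - G 1)"
  proof (rule tele_sum[OF S7 _ lim])
    fix n
    show "(let k = Suc n in (real k * (126 * real k + 29) * (-2) ^ k) / real (4 * k choose (2 * k))) =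
      -8 * (let k = Suc n in ((6 * real k - 1) * (-2) ^ (k - 1)) /
            (real k * (2 * real k - 1) * real (4 * k choose (2 * k)))) + (G (Suc (Suc n)) - G (Suc n))"
      unfolding Let_def by (rule eq) simp
  qed
  have "G 1 = 65/3" unfolding G_def R_def by (simp add: choose_4_2)
  then have val: "-8 * (pi / 4) - G 1 = - 2 * pi - 65 / 3" by simp
  show ?thesis using sf by (simp only: val)
qed

lemma tel11_alg:
  fixes K B B' w :: real
  assumes K: "K \<ge> 1" and B: "B > 0" "B' > 0" and w: "w > 0"
    and rel: "B' * ((2*K+1)^2*(2*K+2)^2) = B * ((4*K+1)*(4*K+2)*(4*K+3)*(4*K+4))"
  shows "(K*(70*K-37))/(w*B) = 184/243*((14*K-3)/(K*(2*K-1)*w*B)) +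
    ((4*(K+1)-3)*(4*(K+1)-1)*(-184/243 - 8/81*(K+1) - 80/9*(K+1)^2)/((K+1)*(2*(K+1)-1)) * (1/(4*w)) / B'
     - (4*K-3)*(4*K-1)*(-184/243 - 8/81*K - 80/9*K^2)/(K*(2*K-1)) * (1/w) / B)"
proof -
  obtain a1 a2 a3 where d: "a1 = 2*K-1" "a2 = K+1" "a3 = 2*K+1" by blast
  have nz: "K \<noteq> 0" "a1 \<noteq> 0" "a2 \<noteq> 0" "a3 \<noteq> 0" "B \<noteq> 0" "B' \<noteq> 0" "w \<noteq> 0" using K B w d by auto
  have r: "2*(K+1)-1 = a3" using d by simp
  show ?thesis unfolding r unfolding d(1)[symmetric] d(2)[symmetric]
    using nz apply (simp add: field_simps)
    unfolding d using rel by algebra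
qed

lemma S11: "(\<lambda>n. let k = Suc n in (real k * (70 * real k - 37)) /
            (4 ^ k * real (4 * k choose (2 * k)))) sums (8 / 729 * (46 * ln 2 + 111))"
proof -
  define R where "R K = (4*K-3)*(4*K-1)*(-184/243 - 8/81*K - 80/9*K^2)/(K*(2*K-1))" for K :: real
  define G where "G k = R (real k) * (1/4)^k / real(4*k choose (2*k))" for k :: nat
  have lim: "(\<lambda>n. G (Suc n)) \<longlonglongrightarrow> 0" unfolding G_def
    by (rule G_lim) (unfold R_def, real_asymp)
  have eq: "(real k * (70 * real k - 37)) / (4 ^ k * real (4 * k choose (2 * k))) =
     184/243 * ((14 * real k - 3) / (real k * (2 * real k - 1) * 4 ^ k * real (4 * k choose (2 * k))))
     + (G (Suc k) - G k)" if k: "k \<ge> 1" for k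
  proof -
    define K where "K = real k"
    define B where "B = real (4*k choose (2*k))"
    define B' where "B' = real (4*Suc k choose (2*Suc k))"
    define w where "w = (4::real)^k"
    have rel: "B' * ((2*K+1)^2*(2*K+2)^2) = B * ((4*K+1)*(4*K+2)*(4*K+3)*(4*K+4))"
      unfolding B_def B'_def K_def by (rule cb_step)
    have B0: "B > 0" "B' > 0" unfolding B_def B'_def using k by auto
    have w0: "w > 0" unfolding w_def by simp
    have K1: "K \<ge> 1" using k unfolding K_def by simp
    have h: "real (Suc k) = K+1" "(1/4::real)^(Suc k) = 1/(4*w)" "(1/4::real)^k = 1/w"
      unfolding K_def w_def by (simp_all add: power_one_over)
    show ?thesis unfolding G_def R_def h unfolding K_def[symmetric] B_def[symmetric] B'_def[symmetric] w_def[symmetric]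
      by (rule tel11_alg[OF K1 B0 w0 rel])
  qed
  have sf: "(\<lambda>n. let k = Suc n in (real k * (70 * real k - 37)) /
            (4 ^ k * real (4 * k choose (2 * k)))) sums (184/243 * (2 / 3 * ln 2) - G 1)"
  proof (rule tele_sum[OF S8 _ lim])
    fix n
    show "(let k = Suc n in (real k * (70 * real k - 37)) / (4 ^ k * real (4 * k choose (2 * k)))) =
      184/243 * (let k = Suc n in (14 * real k - 3) /
            (real k * (2 * real k - 1) * 4 ^ k * real (4 * k choose (2 * k)))) + (G (Suc (Suc n)) - G (Suc n))"
      unfolding Let_def by (rule eq) simp
  qed
  have "G 1 = -296/243" unfolding G_def R_def by (simp add: choose_4_2)
  then have val: "184/243 * (2 / 3 * ln 2) - G 1 = 8 / 729 * (46 * ln 2 + (111::real))"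
    by (simp add: field_simps)
  show ?thesis using sf by (simp only: val)
qed


theorem theorem1p4:
  shows "((\<lambda>n. let k = Suc n in (5 * real k - 2) /
            (real k * (2 * real k - 1) * 2 ^ k * real (3 * k choose k))) sums (pi / 6)) \<and>
     ((\<lambda>n. let k = Suc n in ((7 * real k - 3) * 8 ^ k) /
            (real k * (2 * real k - 1) * 3 ^ k * real (3 * k choose k))) sums (8 * sqrt 3 / 9 * pi)) \<and>
     ((\<lambda>n. let k = Suc n in (28 * real k - 11) /
            (real k * (2 * real k - 1) * (-4) ^ k * real (3 * k choose k))) sums (- 2 * ln 2)) \<and>
     ((\<lambda>n. let k = Suc n in (7 * real k - 2) /
            (real k * (2 * real k - 1) * (-3) ^ k * real (4 * k choose (2 * k)))) sums (- ln 3 / 4)) \<and>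
     ((\<lambda>n. let k = Suc n in (10 * real k - 3) /
            (real k * (2 * real k - 1) * real (4 * k choose (2 * k)))) sums (2 * sqrt 3 / 9 * pi)) \<and>
     ((\<lambda>n. let k = Suc n in ((3 * real k - 1) * 4 ^ k) /
            (real k * (2 * real k - 1) * real (4 * k choose (2 * k)))) sums (pi / 2)) \<and>
     ((\<lambda>n. let k = Suc n in ((6 * real k - 1) * (-2) ^ (k - 1)) /
            (real k * (2 * real k - 1) * real (4 * k choose (2 * k)))) sums (pi / 4)) \<and>
     ((\<lambda>n. let k = Suc n in (14 * real k - 3) /
            (real k * (2 * real k - 1) * 4 ^ k * real (4 * k choose (2 * k)))) sums (2 / 3 * ln 2)) \<and>
     ((\<lambda>n. let k = Suc n in ((12 * real k ^ 2 + 1) * 4 ^ k) /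
            real (4 * k choose (2 * k))) sums (11 / 2 * pi + 50 / 3)) \<and>
     ((\<lambda>n. let k = Suc n in (real k * (126 * real k + 29) * (-2) ^ k) /
            real (4 * k choose (2 * k))) sums (- 2 * pi - 65 / 3)) \<and>
     ((\<lambda>n. let k = Suc n in (real k * (70 * real k - 37)) /
            (4 ^ k * real (4 * k choose (2 * k)))) sums (8 / 729 * (46 * ln 2 + 111)))"
  by (intro conjI S1 S2 S3 S4 S5 S6 S7 S8 S9 S10 S11)

end
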